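(* Let $C\subseteq\mathbb{R}^5$ be a cone. The origin is an isolated point of $C\cap\mathfrak{M}$ if and only if one of the following holds: (i) $C$ is a line (through the origin) intersecting $T$ transversely; (ii) $C\subseteq T^>\cup(T\cap\mathfrak{M}^>)\cup\{0\}$; (iii) $C\subseteq T^<\cup(T\cap\mathfrak{M}^<)\cup\{0\}$.
   Context: A cone is the intersection of finitely many closed halfspaces of $\mathbb{R}^5$ whose bounding hyperplanes pass through the origin. In $\mathbb{R}^5$ with coordinates $(u_1,\dots,u_5)$, let $\mathfrak{M}=\{u_5=u_2u_3-u_1u_4\}$, $\mathfrak{M}^>=\{u_5>u_2u_3-u_1u_4\}$, $\mathfrak{M}^<=\{u_5<u_2u_3-u_1u_4\}$, $T=\{u_5=0\}$, $T^>=\{u_5>0\}$, $T^<=\{u_5<0\}$. *)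

theory Defs
  imports "HOL-Analysis.Analysis"
begin

text \<open>Points of R^5 are vectors of type real^5; coordinates u_1..u_5 are x$1..x$5
 (index 5 of type 5 is the fifth coordinate).\<close>

definition is_cone5 :: "(real^5) set \<Rightarrow> bool" where
  "is_cone5 C \<longleftrightarrow> (\<exists>A. finite A \<and> 0 \<notin> A \<and> C = {x. \<forall>a\<in>A. a \<bullet> x \<le> 0})"

definition qform :: "real^5 \<Rightarrow> real" where
  "qform u = u$2 * u$3 - u$1 * u$4"

definition MM :: "(real^5) set" where "MM = {u. u$5 = qform u}"
definition MM_gt :: "(real^5) set" where "MM_gt = {u. u$5 > qform u}"
definition MM_lt :: "(real^5) set" where "MM_lt = {u. u$5 < qform u}"
definition TT :: "(real^5) set" where "TT = {u. u$5 = 0}"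
definition TT_gt :: "(real^5) set" where "TT_gt = {u. u$5 > 0}"
definition TT_lt :: "(real^5) set" where "TT_lt = {u. u$5 < 0}"

definition transverse_line :: "(real^5) set \<Rightarrow> bool" where
  "transverse_line C \<longleftrightarrow> (\<exists>v. v \<noteq> 0 \<and> C = {t *\<^sub>R v | t. True} \<and> v \<notin> TT)"

end

theory Submission
  imports Defs
begin

lemma cone_props:
  assumes "is_cone5 C"
  shows "convex C" "closed C" "0 \<in> C" "\<And>x t. x \<in> C \<Longrightarrow> t \<ge> 0 \<Longrightarrow> t *\<^sub>R x \<in> C"
proof -
  obtain A where A: "finite A" "C = {x. \<forall>a\<in>A. a \<bullet> x \<le> 0}"
    using assms unfolding is_cone5_def by blast
  show "convex C"
    unfolding A(2) convex_def
  proof (safe)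
    fix x y :: "real^5" and u v :: real and a
    assume h: "\<forall>a\<in>A. a \<bullet> x \<le> 0" "\<forall>a\<in>A. a \<bullet> y \<le> 0" "0 \<le> u" "0 \<le> v" "u + v = 1" "a \<in> A"
    have "u * (a \<bullet> x) \<le> 0" using h by (simp add: mult_nonneg_nonpos)
    moreover have "v * (a \<bullet> y) \<le> 0" using h by (simp add: mult_nonneg_nonpos)
    ultimately show "a \<bullet> (u *\<^sub>R x + v *\<^sub>R y) \<le> 0"
      by (simp add: inner_add_right)
  qed
  have "C = (\<Inter>a\<in>A. {x. a \<bullet> x \<le> 0})" using A(2) by auto
  then show "closed C" by (simp add: closed_INT closed_halfspace_le)
  show "0 \<in> C" unfolding A(2) by simp
  fix x :: "real^5" and t :: real
  assume "x \<in> C" "t \<ge> 0"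
  then show "t *\<^sub>R x \<in> C" unfolding A(2) by (auto simp: mult_nonneg_nonpos)
qed

lemma qform_scale: "qform (t *\<^sub>R x) = t^2 * qform x"
  by (simp add: qform_def power2_eq_square algebra_simps)

lemma qform_bound: "norm x = 1 \<Longrightarrow> \<bar>qform x\<bar> \<le> 2"
proof -
  assume n: "norm x = 1"
  have b: "\<And>i. \<bar>x$i\<bar> \<le> 1" using component_le_norm_cart[of x] n by metis
  have "\<bar>x$2 * x$3\<bar> \<le> 1" using b[of 2] b[of 3] by (simp add: abs_mult mult_le_one)
  moreover have "\<bar>x$1 * x$4\<bar> \<le> 1" using b[of 1] b[of 4] by (simp add: abs_mult mult_le_one)
  ultimately show ?thesis unfolding qform_def by linarith
qed

lemma notiso:
  assumes "\<And>e. e > 0 \<Longrightarrow> \<exists>x\<in>C \<inter> MM. x \<noteq> 0 \<and> norm x < e"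
  shows "\<not> (0::real^5) isolated_in (C \<inter> MM)"
  unfolding isolated_in_dist_Ex_iff using assms by (metis dist_0_norm)

lemma seg_lemma:
  fixes C :: "(real^5) set"
  assumes cvx: "convex C" and sc: "\<And>x t. x \<in> C \<Longrightarrow> t \<ge> 0 \<Longrightarrow> t *\<^sub>R x \<in> C"
    and aC: "a \<in> C" and bC: "b \<in> C" and nz: "0 \<notin> closed_segment a b"
    and ep: "\<epsilon> > 0"
    and F: "\<And>t. 0 < t \<Longrightarrow> t < \<epsilon> \<Longrightarrow> a$5 - t * qform a \<ge> 0 \<and> b$5 - t * qform b \<le> 0"
    and e: "e > 0"
  shows "\<exists>x\<in>C \<inter> MM. x \<noteq> 0 \<and> norm x < e"
proof -
  define t where "t = min (\<epsilon>/2) (e / (2 * (norm a + norm b + 1)))"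
  have npos: "norm a + norm b + 1 > 0" by (simp add: add_nonneg_pos)
  have tpos: "t > 0" unfolding t_def using ep e npos by simp
  have tle: "t < \<epsilon>" unfolding t_def using ep by simp
  have te: "t * (norm a + norm b + 1) \<le> e / 2"
  proof -
    have "t \<le> e / (2 * (norm a + norm b + 1))" unfolding t_def by simp
    hence "t * (norm a + norm b + 1) \<le> e / (2 * (norm a + norm b + 1)) * (norm a + norm b + 1)"
      using npos by (intro mult_right_mono) auto
    also have "\<dots> = e / 2" using npos by (simp add: field_simps)
    finally show ?thesis .
  qed
  define p where "p = (\<lambda>s::real. (1 - s) *\<^sub>R a + s *\<^sub>R b)"
  define f where "f = (\<lambda>s. (p s)$5 - t * qform (p s))"
  have cont: "continuous_on {0..1} f"
    unfolding f_def p_def qform_def by (intro continuous_intros)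
  have f0: "f 0 \<ge> 0" using F[OF tpos tle] unfolding f_def p_def by simp
  have f1: "f 1 \<le> 0" using F[OF tpos tle] unfolding f_def p_def by simp
  obtain s where s: "0 \<le> s" "s \<le> 1" "f s = 0"
    using IVT2'[of f 1 0 0, OF f1 f0 _ cont] by auto
  have pseg: "p s \<in> closed_segment a b"
    unfolding closed_segment_def p_def using s by auto
  hence pnz: "p s \<noteq> 0" using nz by auto
  have pC: "p s \<in> C" unfolding p_def using s aC bC cvx by (intro convexD) auto
  define x where "x = t *\<^sub>R p s"
  have xC: "x \<in> C" unfolding x_def using sc[OF pC] tpos by simp
  have p5: "(p s)$5 = t * qform (p s)" using s(3) unfolding f_def by simp
  have xM: "x \<in> MM" unfolding MM_def x_def using p5
    by (simp add: qform_scale power2_eq_square)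
  have xnz: "x \<noteq> 0" unfolding x_def using tpos pnz by simp
  have "norm (p s) \<le> (1 - s) * norm a + s * norm b"
    unfolding p_def using s norm_triangle_le[of "(1 - s) *\<^sub>R a" "s *\<^sub>R b"] by simp
  also have "\<dots> \<le> norm a + norm b"
    using s by (intro add_mono) (auto simp: mult_left_le_one_le)
  finally have np: "norm (p s) \<le> norm a + norm b" .
  have "norm x = t * norm (p s)" unfolding x_def using tpos by simp
  also have "\<dots> \<le> t * (norm a + norm b + 1)" using tpos np by (intro mult_left_mono) auto
  also have "\<dots> < e" using te e by simp
  finally show ?thesis using xC xM xnz by blast
qed

lemma P_lemma:
  assumes "x$5 > 0 \<or> (x$5 = 0 \<and> qform x < 0)"
  shows "\<exists>\<epsilon>>0. \<forall>t. 0 < t \<and> t < \<epsilon> \<longrightarrow> x$5 - t * qform x \<ge> 0"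
proof (cases "x$5 > 0")
  case True
  define \<epsilon> where "\<epsilon> = x$5 / (\<bar>qform x\<bar> + 1)"
  have "\<epsilon> > 0" unfolding \<epsilon>_def using True by (simp add: add_nonneg_pos)
  moreover have "x$5 - t * qform x \<ge> 0" if "0 < t" "t < \<epsilon>" for t
  proof -
    have "t * qform x \<le> t * (\<bar>qform x\<bar> + 1)" using that by (intro mult_left_mono) auto
    also have "\<dots> \<le> \<epsilon> * (\<bar>qform x\<bar> + 1)" using that by (intro mult_right_mono) auto
    also have "\<dots> = x$5" unfolding \<epsilon>_def by (simp add: add_nonneg_pos field_simps)
    finally show ?thesis by simp
  qed
  ultimately show ?thesis by blast
next
  case False
  then have "x$5 = 0" "qform x < 0" using assms by auto
  then show ?thesis by (intro exI[of _ 1]) (auto simp: mult_nonneg_nonpos)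
qed

lemma N_lemma:
  assumes "x$5 < 0 \<or> (x$5 = 0 \<and> qform x > 0)"
  shows "\<exists>\<epsilon>>0. \<forall>t. 0 < t \<and> t < \<epsilon> \<longrightarrow> x$5 - t * qform x \<le> 0"
proof (cases "x$5 < 0")
  case True
  define \<epsilon> where "\<epsilon> = - x$5 / (\<bar>qform x\<bar> + 1)"
  have "\<epsilon> > 0" unfolding \<epsilon>_def using True by (intro divide_pos_pos) (auto simp: add_nonneg_pos)
  moreover have "x$5 - t * qform x \<le> 0" if "0 < t" "t < \<epsilon>" for t
  proof -
    have "- t * qform x \<le> t * (\<bar>qform x\<bar> + 1)" using that
      by (metis abs_ge_minus_self add.commute add_increasing mult_minus_left mult_minus_right mult_left_mono order_less_imp_le zero_le_one)
    also have "\<dots> \<le> \<epsilon> * (\<bar>qform x\<bar> + 1)" using that by (intro mult_right_mono) auto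
    also have "\<dots> = - x$5" unfolding \<epsilon>_def by (simp add: add_nonneg_pos field_simps)
    finally show ?thesis by simp
  qed
  ultimately show ?thesis by blast
next
  case False
  then have "x$5 = 0" "qform x > 0" using assms by auto
  then show ?thesis by (intro exI[of _ 1]) auto
qed

lemma Z_lemma:
  assumes "x \<in> C" "x \<noteq> 0" "x$5 = 0" "qform x = 0"
    and sc: "\<And>x t. x \<in> C \<Longrightarrow> t \<ge> 0 \<Longrightarrow> t *\<^sub>R x \<in> C"
    and e: "e > 0"
  shows "\<exists>x\<in>C \<inter> MM. x \<noteq> 0 \<and> norm x < e"
proof -
  define t where "t = e / (2 * norm x)"
  have t: "t > 0" unfolding t_def using assms by simp
  have "t *\<^sub>R x \<in> C \<inter> MM" using sc[OF assms(1)] t assms(3,4)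
    by (simp add: MM_def qform_scale)
  moreover have "t *\<^sub>R x \<noteq> 0" using t assms by simp
  moreover have "norm (t *\<^sub>R x) < e" unfolding t_def using assms by simp
  ultimately show ?thesis by blast
qed

lemma seg0:
  fixes a b :: "real^5"
  assumes "a \<noteq> 0" "0 \<in> closed_segment a b"
  shows "\<exists>c. b = c *\<^sub>R a"
proof -
  obtain u where u: "0 = (1 - u) *\<^sub>R a + u *\<^sub>R b" "0 \<le> u" "u \<le> 1"
    using assms(2) unfolding closed_segment_def by auto
  have "u \<noteq> 0" using u assms(1) by auto
  have "u *\<^sub>R b = - ((1 - u) *\<^sub>R a)" using u(1)
    by (metis add.commute eq_neg_iff_add_eq_0)
  also have "\<dots> = (u - 1) *\<^sub>R a" by (simp add: algebra_simps)
  finally have "u *\<^sub>R b = (u - 1) *\<^sub>R a" .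
  then have "(1/u) *\<^sub>R (u *\<^sub>R b) = ((u - 1) / u) *\<^sub>R a" by simp
  then have "b = ((u - 1) / u) *\<^sub>R a" using \<open>u \<noteq> 0\<close> by simp
  then show ?thesis by blast
qed

lemma iso_side:
  fixes C :: "(real^5) set" and \<sigma> :: real
  assumes \<sigma>: "\<sigma> = 1 \<or> \<sigma> = -1" and cl: "closed C" and z: "0 \<in> C"
    and sc: "\<And>x t. x \<in> C \<Longrightarrow> t \<ge> 0 \<Longrightarrow> t *\<^sub>R x \<in> C"
    and H: "\<And>y. y \<in> C \<Longrightarrow> y \<noteq> 0 \<Longrightarrow> \<sigma> * y$5 > 0 \<or> (y$5 = 0 \<and> \<sigma> * qform y < 0)"
  shows "(0::real^5) isolated_in (C \<inter> MM)"
proof -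
  define K where "K = C \<inter> {y. norm y = 1} \<inter> {y. 0 \<le> \<sigma> * qform y}"
  have "closed K" unfolding K_def qform_def using cl
    by (intro closed_Int closed_Collect_eq closed_Collect_le continuous_intros) auto
  moreover have "bounded K" unfolding K_def by (rule bounded_subset[of "cball 0 1"]) auto
  ultimately have cK: "compact K" by (simp add: compact_eq_bounded_closed)
  obtain m where m: "m > 0" "\<And>y. y \<in> K \<Longrightarrow> m \<le> \<sigma> * y$5"
  proof (cases "K = {}")
    case True then show ?thesis using that[of 1] by auto
  next
    case False
    have "continuous_on K (\<lambda>y. \<sigma> * y$5)" by (intro continuous_intros)
    then obtain y0 where y0: "y0 \<in> K" "\<And>y. y \<in> K \<Longrightarrow> \<sigma> * y0$5 \<le> \<sigma> * y$5"
      using continuous_attains_inf[OF cK False] by blast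
    have "y0 \<in> C" "y0 \<noteq> 0" "0 \<le> \<sigma> * qform y0" using y0(1) unfolding K_def by auto
    then have "\<sigma> * y0$5 > 0" using H by fastforce
    then show ?thesis using that y0 by blast
  qed
  have z0: "0 \<in> C \<inter> MM" using z by (simp add: MM_def qform_def)
  have "x = 0" if xS: "x \<in> C \<inter> MM" and d: "dist 0 x < m / 2" for x
  proof (rule ccontr)
    assume xnz: "x \<noteq> 0"
    define r where "r = norm x"
    have r: "r > 0" unfolding r_def using xnz by simp
    define y where "y = (1 / r) *\<^sub>R x"
    have yC: "y \<in> C" unfolding y_def using sc xS r by simp
    have ny: "norm y = 1" unfolding y_def r_def using xnz by simp
    have x5: "x$5 = qform x" using xS by (simp add: MM_def)
    have qy: "qform y = qform x / r^2" unfolding y_def qform_scale by (simp add: power2_eq_square)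
    have y5: "y$5 = x$5 / r" unfolding y_def by simp
    show False
    proof (cases "\<sigma> * qform x < 0")
      case True
      then show False using H[OF _ xnz] xS x5 by auto
    next
      case False
      then have "0 \<le> \<sigma> * qform y" unfolding qy using r
        by (simp add: mult.assoc[symmetric] divide_nonneg_pos)
      then have "y \<in> K" unfolding K_def using yC ny by simp
      then have "m \<le> \<sigma> * y$5" using m by simp
      also have "\<sigma> * y$5 = r * (\<sigma> * qform y)" unfolding y5 qy x5 using r
        by (simp add: power2_eq_square field_simps)
      also have "\<dots> \<le> r * 2"
      proof -
        have "\<sigma> * qform y \<le> 2" using qform_bound[OF ny] \<sigma> by auto
        then show ?thesis using r by simp
      qed
      finally have "m / 2 \<le> r" by simp
      then show False using d unfolding r_def by simp
    qed
  qed
  then show ?thesis unfolding isolated_in_dist_Ex_iff using z0 m(1)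
    by (intro conjI exI[of _ "m/2"]) auto
qed

lemma iso_line:
  fixes v :: "real^5"
  assumes C: "C = {t *\<^sub>R v | t. True}" and v5: "v$5 \<noteq> 0"
  shows "(0::real^5) isolated_in (C \<inter> MM)"
proof -
  define e where "e = (if qform v = 0 then 1 else \<bar>v$5 / qform v\<bar> * norm v)"
  have vnz: "v \<noteq> 0" using v5 by auto
  have e: "e > 0" unfolding e_def using v5 vnz by simp
  have z0: "0 \<in> C \<inter> MM" unfolding C by (auto simp: MM_def qform_def intro: exI[of _ 0])
  have "x = 0" if xS: "x \<in> C \<inter> MM" and d: "dist 0 x < e" for x
  proof (rule ccontr)
    assume xnz: "x \<noteq> 0"
    obtain t where t: "x = t *\<^sub>R v" using xS C by auto
    have tnz: "t \<noteq> 0" using xnz t by auto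
    have "t * v$5 = t^2 * qform v" using xS t by (simp add: MM_def qform_scale)
    then have h: "v$5 = t * qform v" using tnz by (simp add: power2_eq_square)
    then have qnz: "qform v \<noteq> 0" using v5 by auto
    then have "t = v$5 / qform v" using h by (simp add: field_simps)
    then have "norm x = e" unfolding e_def t using qnz by simp
    then show False using d by simp
  qed
  then show ?thesis unfolding isolated_in_dist_Ex_iff using z0 e
    by (intro conjI exI[of _ e]) auto
qed

theorem lemma8:
  fixes C :: "(real^5) set"
  assumes "is_cone5 C"
  shows "(0::real^5) isolated_in (C \<inter> MM) \<longleftrightarrow>
           transverse_line C
         \<or> C \<subseteq> TT_gt \<union> (TT \<inter> MM_gt) \<union> {0}
         \<or> C \<subseteq> TT_lt \<union> (TT \<inter> MM_lt) \<union> {0}"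
proof -
  note cp = cone_props[OF assms]
  have cvx: "convex C" and cl: "closed C" and z0: "0 \<in> C" using cp by auto
  have sc: "\<And>x t. x \<in> C \<Longrightarrow> t \<ge> 0 \<Longrightarrow> t *\<^sub>R x \<in> C" using cp(4) by blast
  show ?thesis
  proof
    assume iso: "(0::real^5) isolated_in (C \<inter> MM)"
    have NI: False if "\<And>e. e > 0 \<Longrightarrow> \<exists>x\<in>C \<inter> MM. x \<noteq> 0 \<and> norm x < e"
      using notiso[OF that] iso by blast
    have Z: False if "x \<in> C" "x \<noteq> 0" "x$5 = 0" "qform x = 0" for x
      by (rule NI) (rule Z_lemma[OF that sc])
    have PN: False if a: "a \<in> C" "a$5 > 0 \<or> (a$5 = 0 \<and> qform a < 0)"
      and b: "b \<in> C" "b$5 < 0 \<or> (b$5 = 0 \<and> qform b > 0)"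
      and nz: "0 \<notin> closed_segment a b" for a b
    proof -
      obtain e1 where e1: "e1 > 0" "\<forall>t. 0 < t \<and> t < e1 \<longrightarrow> a$5 - t * qform a \<ge> 0"
        using P_lemma[OF a(2)] by blast
      obtain e2 where e2: "e2 > 0" "\<forall>t. 0 < t \<and> t < e2 \<longrightarrow> b$5 - t * qform b \<le> 0"
        using N_lemma[OF b(2)] by blast
      show False
        by (rule NI, rule seg_lemma[OF cvx sc a(1) b(1) nz, of "min e1 e2"]) (use e1 e2 in auto)
    qed
    show "transverse_line C
         \<or> C \<subseteq> TT_gt \<union> (TT \<inter> MM_gt) \<union> {0}
         \<or> C \<subseteq> TT_lt \<union> (TT \<inter> MM_lt) \<union> {0}"
    proof (rule ccontr)
      assume nd: "\<not> ?thesis"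
      obtain y where y: "y \<in> C" "y \<noteq> 0" "y$5 < 0 \<or> (y$5 = 0 \<and> qform y > 0)"
      proof -
        obtain y where "y \<in> C" "y \<notin> TT_gt \<union> (TT \<inter> MM_gt) \<union> {0}" using nd by blast
        then have "y \<in> C" "y \<noteq> 0" "y$5 \<le> 0" "y$5 = 0 \<longrightarrow> qform y \<ge> 0"
          by (auto simp: TT_gt_def TT_def MM_gt_def)
        moreover have "\<not> (y$5 = 0 \<and> qform y = 0)" using Z calculation by blast
        ultimately show ?thesis using that by force
      qed
      obtain z where z: "z \<in> C" "z \<noteq> 0" "z$5 > 0 \<or> (z$5 = 0 \<and> qform z < 0)"
      proof -
        obtain z where "z \<in> C" "z \<notin> TT_lt \<union> (TT \<inter> MM_lt) \<union> {0}" using nd by blast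
        then have "z \<in> C" "z \<noteq> 0" "z$5 \<ge> 0" "z$5 = 0 \<longrightarrow> qform z \<le> 0"
          by (auto simp: TT_lt_def TT_def MM_lt_def)
        moreover have "\<not> (z$5 = 0 \<and> qform z = 0)" using Z calculation by blast
        ultimately show ?thesis using that by force
      qed
      have "0 \<in> closed_segment z y"
        using PN[OF z(1,3) y(1,3)] by blast
      then obtain c where c: "y = c *\<^sub>R z" using seg0[OF z(2)] by blast
      have cneg: "c < 0"
      proof (rule ccontr)
        assume "\<not> c < 0"
        moreover have "c \<noteq> 0" using c y(2) by auto
        ultimately have cp: "c > 0" by simp
        have "y$5 = c * z$5" "qform y = c^2 * qform z" using c by (auto simp: qform_scale)
        then show False using y(3) z(3) cp
          by (auto simp: zero_less_mult_iff mult_less_0_iff)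
      qed
      have z5: "z$5 \<noteq> 0"
      proof
        assume "z$5 = 0"
        then have "qform z < 0" using z(3) by simp
        moreover have "y$5 = c * z$5" "qform y = c^2 * qform z" using c by (auto simp: qform_scale)
        moreover have "c^2 > 0" using cneg by simp
        ultimately have "c^2 * qform z < 0" by (simp add: mult_pos_neg)
        then show False using y(3) \<open>z$5 = 0\<close> \<open>y$5 = c * z$5\<close> \<open>qform y = c^2 * qform z\<close>
          by simp
      qed
      define L where "L = {t *\<^sub>R z | t. True}"
      show False
      proof (cases "C \<subseteq> L")
        case True
        have "L \<subseteq> C"
        proof
          fix x assume "x \<in> L"
          then obtain t where t: "x = t *\<^sub>R z" unfolding L_def by blast
          show "x \<in> C"
          proof (cases "t \<ge> 0")
            case True then show ?thesis using sc[OF z(1)] t by simp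
          next
            case False
            then have "t / c \<ge> 0" using cneg by (simp add: divide_nonpos_neg)
            then have "(t / c) *\<^sub>R y \<in> C" using sc[OF y(1)] by simp
            moreover have "(t / c) *\<^sub>R y = x" using c t cneg by simp
            ultimately show ?thesis by simp
          qed
        qed
        with True have "C = L" by blast
        then have "transverse_line C" unfolding transverse_line_def L_def
          using z(2) z5 by (auto simp: TT_def)
        then show False using nd by blast
      next
        case False
        then obtain w where w: "w \<in> C" "w \<notin> L" by blast
        have wnz: "w \<noteq> 0" using w(2) unfolding L_def by (auto intro: exI[of _ 0])
        consider "w$5 > 0 \<or> (w$5 = 0 \<and> qform w < 0)" | "w$5 < 0 \<or> (w$5 = 0 \<and> qform w > 0)"
          | "w$5 = 0 \<and> qform w = 0" by force
        then show False
        proof cases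
          case 1
          have "0 \<in> closed_segment w y" using PN[OF w(1) 1 y(1,3)] by blast
          then obtain c' where c': "y = c' *\<^sub>R w" using seg0[OF wnz] by blast
          have "c' \<noteq> 0" using c' y(2) by auto
          have "c' *\<^sub>R w = c *\<^sub>R z" using c c' by simp
          then have "(1/c') *\<^sub>R (c' *\<^sub>R w) = (1/c') *\<^sub>R (c *\<^sub>R z)" by simp
          then have "w = (c / c') *\<^sub>R z" using \<open>c' \<noteq> 0\<close> by simp
          then show False using w(2) unfolding L_def by blast
        next
          case 2
          have "0 \<in> closed_segment z w" using PN[OF z(1,3) w(1) 2] by blast
          then obtain c' where "w = c' *\<^sub>R z" using seg0[OF z(2)] by blast
          then show False using w(2) unfolding L_def by blast
        next
          case 3
          then show False using Z w(1) wnz by blast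
        qed
      qed
    qed
  next
    assume "transverse_line C
         \<or> C \<subseteq> TT_gt \<union> (TT \<inter> MM_gt) \<union> {0}
         \<or> C \<subseteq> TT_lt \<union> (TT \<inter> MM_lt) \<union> {0}"
    then consider "transverse_line C" | "C \<subseteq> TT_gt \<union> (TT \<inter> MM_gt) \<union> {0}"
      | "C \<subseteq> TT_lt \<union> (TT \<inter> MM_lt) \<union> {0}" by blast
    then show "(0::real^5) isolated_in (C \<inter> MM)"
    proof cases
      case 1
      then obtain v where "C = {t *\<^sub>R v | t. True}" "v \<notin> TT"
        unfolding transverse_line_def by blast
      then show ?thesis by (intro iso_line) (auto simp: TT_def)
    next
      case 2
      show ?thesis
      proof (rule iso_side[of 1, OF _ cl z0 sc])
        fix y assume "y \<in> C" "y \<noteq> 0"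
        then show "1 * y$5 > 0 \<or> (y$5 = 0 \<and> 1 * qform y < 0)"
          using 2 by (auto simp: TT_gt_def TT_def MM_gt_def)
      qed simp
    next
      case 3
      show ?thesis
      proof (rule iso_side[of "-1", OF _ cl z0 sc])
        fix y assume "y \<in> C" "y \<noteq> 0"
        then show "-1 * y$5 > 0 \<or> (y$5 = 0 \<and> -1 * qform y < 0)"
          using 3 by (auto simp: TT_lt_def TT_def MM_lt_def)
      qed simp
    qed
  qed
qed

end
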